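(* Let $p\ge1$ and let $\Gamma_j=[\alpha_j,\beta_j]$, $j=1,\ldots,p$, be intervals with $\beta_j<\alpha_{j+1}$ for $j=1,\ldots,p-1$. Let $w_1,\ldots,w_p$ be non-negative weight functions on $\mathbb R$ with $w_j(x)=0$ for $x\notin\Gamma_j$. Let $\vec n=(n_1,\ldots,n_p)\in\mathbb N^p$, $n=n_1+\cdots+n_p$, $N_j=n_1+\cdots+n_j$, $N_0=0$, and define $g_{i+N_{j-1}}(x)=x^{i-1}w_j(x)$ for $i=1,\ldots,n_j$, $j=1,\ldots,p$. Then: (i) $\det\left[g_j(x_k)\right]_{j,k=1,\ldots,n}\ge 0$ for every choice of real points $x_1<x_2<\cdots<x_n$; consequently $\det[x_k^{j-1}]_{j,k=1,\ldots,n}\cdot\det[g_j(x_k)]_{j,k=1,\ldots,n}\ge 0$ on all of $\mathbb R^n$. (ii) If $x_1<\cdots<x_n$ and $x^{(j)}_k:=x_{N_{j-1}+k}\in\Gamma_j$ for $k=1,\ldots,n_j$, $j=1,\ldots,p$, then, writing $X^{(i)}=(x^{(i)}_1,\ldots,x^{(i)}_{n_i})$ and $X=(x_1,\ldots,x_n)$, \[\det\left[g_j(x_k)\right]=\prod_{i=1}^p\Big(\Delta(X^{(i)})\prod_{k=1}^{n_i}w_i(x^{(i)}_k)\Big),\] and \[\det[x_k^{j-1}]\cdot\det[g_j(x_k)]=\prod_{i=1}^p\Delta(X^{(i)})^2\cdot\prod_{1\le i<j\le p}\Delta(X^{(i)},X^{(j)})\cdot\prod_{i=1}^p\prod_{k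=1}^{n_i}w_i(x^{(i)}_k).\]
   Context: For $X=(x_1,\ldots,x_m)$, $\Delta(X)=\prod_{1\le j<k\le m}(x_k-x_j)$; for $X=(x_1,\ldots,x_m)$ and $Y=(y_1,\ldots,y_l)$, $\Delta(X,Y)=\prod_{k=1}^m\prod_{j=1}^l(x_k-y_j)$. Such weights form an Angelesco system. *)

theory Defs
  imports Main "Jordan_Normal_Form.Determinant"
begin

text \<open>Indices are 0-based: intervals/weights/block sizes are indexed by j < p,
  points by k < n.\<close>

definition Delta :: "real list \<Rightarrow> real" where
  "Delta xs = (\<Prod>k<length xs. \<Prod>j<k. xs ! k - xs ! j)"

definition Delta2 :: "real list \<Rightarrow> real list \<Rightarrow> real" where
  "Delta2 xs ys = (\<Prod>k<length xs. \<Prod>j<length ys. xs ! k - ys ! j)"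

definition Nsum :: "(nat \<Rightarrow> nat) \<Rightarrow> nat \<Rightarrow> nat" where
  "Nsum ns j = (\<Sum>i<j. ns i)"

definition gfun :: "nat \<Rightarrow> (nat \<Rightarrow> nat) \<Rightarrow> (nat \<Rightarrow> real \<Rightarrow> real) \<Rightarrow> nat \<Rightarrow> real \<Rightarrow> real" where
  "gfun p ns w m x =
     (let j = (THE j. j < p \<and> Nsum ns j \<le> m \<and> m < Nsum ns (Suc j))
      in x ^ (m - Nsum ns j) * w j x)"

definition Gmat :: "nat \<Rightarrow> (nat \<Rightarrow> nat) \<Rightarrow> (nat \<Rightarrow> real \<Rightarrow> real) \<Rightarrow> (nat \<Rightarrow> real) \<Rightarrow> real mat" where
  "Gmat p ns w x = (let n = Nsum ns p in mat n n (\<lambda>(j, k). gfun p ns w j (x k)))"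

definition Vmat :: "nat \<Rightarrow> (nat \<Rightarrow> real) \<Rightarrow> real mat" where
  "Vmat n x = mat n n (\<lambda>(j, k). x k ^ j)"

definition block :: "(nat \<Rightarrow> nat) \<Rightarrow> (nat \<Rightarrow> real) \<Rightarrow> nat \<Rightarrow> real list" where
  "block ns x i = map (\<lambda>k. x (Nsum ns i + k)) [0..<ns i]"

end

theory Submission
  imports Defs
begin


lemma det_scale_cols:
  assumes A: "A \<in> carrier_mat n n"
  shows "det (mat n n (\<lambda>(i,j). A $$ (i,j) * c j)) = det A * (\<Prod>j<n. c j)"
proof -
  have M: "mat n n (\<lambda>(i,j). A $$ (i,j) * c j) \<in> carrier_mat n n" by simp
  show ?thesis unfolding det_def'[OF M] det_def'[OF A] sum_distrib_right
  proof (rule sum.cong[OF refl])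
    fix p assume "p \<in> {p. p permutes {0..<n}}"
    hence p: "p permutes {0..<n}" by simp
    have pi: "\<And>i. i < n \<Longrightarrow> p i < n" using p permutes_in_image by fastforce
    have "(\<Prod>i = 0..<n. mat n n (\<lambda>(i,j). A $$ (i,j) * c j) $$ (i, p i))
        = (\<Prod>i = 0..<n. A $$ (i, p i) * c (p i))"
      by (rule prod.cong, auto simp: pi)
    also have "\<dots> = (\<Prod>i = 0..<n. A $$ (i, p i)) * (\<Prod>i = 0..<n. c (p i))"
      by (simp add: prod.distrib)
    also have "(\<Prod>i = 0..<n. c (p i)) = (\<Prod>i = 0..<n. c i)"
      using prod.permute[OF p, of c] by (simp add: comp_def)
    finally show "signof p * (\<Prod>i = 0..<n. mat n n (\<lambda>(i,j). A $$ (i,j) * c j) $$ (i, p i))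
      = signof p * (\<Prod>i = 0..<n. A $$ (i, p i)) * (\<Prod>j<n. c j)"
      by (simp add: lessThan_atLeast0)
  qed
qed

lemma vandermonde:
  "det (mat n n (\<lambda>(j,k). (y k :: real) ^ j)) = (\<Prod>k<n. \<Prod>j<k. y k - y j)"
proof (induction n arbitrary: y)
  case 0
  then show ?case by (simp add: det_dim_zero)
next
  case (Suc n)
  define V where "V = mat (Suc n) (Suc n) (\<lambda>(j,k). y k ^ j)"
  define E where "E = mat (Suc n) (Suc n) (\<lambda>(i,j). (if j = i then 1 else 0) + (if 0 < i \<and> j = i - 1 then - y 0 else 0) :: real)"
  have Ec: "E \<in> carrier_mat (Suc n) (Suc n)" and Vc: "V \<in> carrier_mat (Suc n) (Suc n)"
    by (auto simp: E_def V_def)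
  have dimEV: "dim_row E = Suc n" "dim_col V = Suc n" by (simp_all add: E_def V_def)
  have detE: "det E = 1"
  proof -
    have "det E = prod_list (diag_mat E)"
      by (rule det_lower_triangular[OF _ Ec], auto simp: E_def)
    also have "diag_mat E = replicate (Suc n) 1"
      by (rule nth_equalityI, auto simp add: diag_mat_def E_def simp del: upt_Suc replicate_Suc)
    finally show ?thesis by simp
  qed
  have EV: "(E * V) $$ (i,k) = (if i = 0 then 1 else y k ^ (i - 1) * (y k - y 0))"
    if "i < Suc n" "k < Suc n" for i k
  proof -
    have "(E * V) $$ (i,k) = (\<Sum>l\<in>{0..<Suc n}. E $$ (i,l) * V $$ (l,k))"
      using that Ec Vc by (simp add: scalar_prod_def)
    also have "\<dots> = (\<Sum>l\<in>{0..<Suc n}. (if l = i then V $$ (l,k) else 0) + (if 0 < i \<and> l = i - 1 then - y 0 * V $$ (l,k) else 0))"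
      by (rule sum.cong, insert that, auto simp: E_def)
    also have "\<dots> = V $$ (i,k) + (if 0 < i then - y 0 * V $$ (i - 1,k) else 0)"
    proof -
      have s1: "(\<Sum>l\<in>{0..<Suc n}. (if l = i then V $$ (l,k) else 0)) = V $$ (i,k)"
        using that by (simp add: sum.delta)
      have s2: "(\<Sum>l\<in>{0..<Suc n}. (if 0 < i \<and> l = i - 1 then - y 0 * V $$ (l,k) else 0))
          = (if 0 < i then - y 0 * V $$ (i - 1,k) else 0)"
      proof (cases "0 < i")
        case True
        then show ?thesis using that by (simp add: sum.delta)
      qed simp
      show ?thesis unfolding sum.distrib s1 s2 ..
    qed
    finally show ?thesis using that
      by (cases i, auto simp: V_def algebra_simps)
  qed
  define A4 where "A4 = mat n n (\<lambda>(j,k). y (Suc k) ^ j * (y (Suc k) - y 0))"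
  have EV4: "E * V = four_block_mat (mat 1 1 (\<lambda>_. 1)) (mat 1 n (\<lambda>_. 1)) (0\<^sub>m n 1) A4"
  proof (rule eq_matI)
    fix i j assume ij: "i < dim_row (four_block_mat (mat 1 1 (\<lambda>_. 1)) (mat 1 n (\<lambda>_. 1)) (0\<^sub>m n 1) A4)"
      "j < dim_col (four_block_mat (mat 1 1 (\<lambda>_. 1)) (mat 1 n (\<lambda>_. 1)) (0\<^sub>m n 1) A4)"
    hence ij': "i < Suc n" "j < Suc n" by (auto simp: A4_def)
    show "(E * V) $$ (i, j) = four_block_mat (mat 1 1 (\<lambda>_. 1)) (mat 1 n (\<lambda>_. 1)) (0\<^sub>m n 1) A4 $$ (i, j)"
      unfolding EV[OF ij'] using ij' by (auto simp: A4_def)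
  qed (auto simp: A4_def dimEV)
  have "det (E * V) = det (mat 1 1 (\<lambda>_. 1)) * det A4"
    unfolding EV4 by (rule det_four_block_mat_lower_left_zero_col, auto simp: A4_def)
  also have "det (mat 1 1 (\<lambda>_. 1::real)) = 1" by (simp add: det_single)
  also have "det A4 = det (mat n n (\<lambda>(j,k). y (Suc k) ^ j)) * (\<Prod>k<n. y (Suc k) - y 0)"
  proof -
    have cs: "det (mat n n (\<lambda>(i,j). mat n n (\<lambda>(j,k). y (Suc k) ^ j) $$ (i,j) * (y (Suc j) - y 0)))
      = det (mat n n (\<lambda>(j,k). y (Suc k) ^ j)) * (\<Prod>k<n. y (Suc k) - y 0)"
      by (rule det_scale_cols, simp)
    have meq: "mat n n (\<lambda>(i,j). mat n n (\<lambda>(j,k). y (Suc k) ^ j) $$ (i,j) * (y (Suc j) - y 0)) = A4"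
      by (rule eq_matI, auto simp: A4_def)
    show ?thesis using cs unfolding meq .
  qed
  also have "det (mat n n (\<lambda>(j,k). y (Suc k) ^ j)) = (\<Prod>k<n. \<Prod>j<k. y (Suc k) - y (Suc j))"
    using Suc.IH[of "\<lambda>k. y (Suc k)"] by simp
  finally have "det V = (\<Prod>k<n. \<Prod>j<k. y (Suc k) - y (Suc j)) * (\<Prod>k<n. y (Suc k) - y 0)"
    using det_mult[OF Ec Vc] detE by simp
  also have "\<dots> = (\<Prod>k<Suc n. \<Prod>j<k. y k - y j)"
  proof -
    have "(\<Prod>k<Suc n. \<Prod>j<k. y k - y j) = (\<Prod>k<n. \<Prod>j<Suc k. y (Suc k) - y j)"
      unfolding prod.lessThan_Suc_shift[of "\<lambda>k. \<Prod>j<k. y k - y j"] by simp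
    also have "\<dots> = (\<Prod>k<n. (y (Suc k) - y 0) * (\<Prod>j<k. y (Suc k) - y (Suc j)))"
      by (rule prod.cong[OF refl], rule prod.lessThan_Suc_shift)
    finally show ?thesis by (simp add: prod.distrib mult.commute)
  qed
  finally show ?case unfolding V_def .
qed



lemma Nsum_Suc: "Nsum ns (Suc j) = Nsum ns j + ns j"
  by (simp add: Nsum_def)

lemma Nsum_mono: "j \<le> j' \<Longrightarrow> Nsum ns j \<le> Nsum ns j'"
  unfolding Nsum_def by (rule sum_mono2, auto)

lemma Nsum_zero[simp]: "Nsum ns 0 = 0" by (simp add: Nsum_def)

lemma Nsum_decomp: "m < Nsum ns p \<Longrightarrow> \<exists>j k. j < p \<and> k < ns j \<and> m = Nsum ns j + k"
proof (induction p)
  case 0 then show ?case by simp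
next
  case (Suc p)
  show ?case
  proof (cases "m < Nsum ns p")
    case True then show ?thesis using Suc.IH by (meson less_SucI)
  next
    case False
    then show ?thesis using Suc.prems
      by (intro exI[of _ p] exI[of _ "m - Nsum ns p"], auto simp: Nsum_Suc)
  qed
qed

lemma block_unique:
  assumes "k < ns j" "k' < ns j'" "Nsum ns j + k = Nsum ns j' + k'"
  shows "j = j' \<and> k = k'"
proof -
  have "\<not> j < j'" "\<not> j' < j"
  proof -
    show "\<not> j < j'"
    proof
      assume "j < j'"
      hence "Nsum ns (Suc j) \<le> Nsum ns j'" by (intro Nsum_mono, simp)
      thus False using assms by (simp add: Nsum_Suc)
    qed
    show "\<not> j' < j"
    proof
      assume "j' < j"
      hence "Nsum ns (Suc j') \<le> Nsum ns j" by (intro Nsum_mono, simp)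
      thus False using assms by (simp add: Nsum_Suc)
    qed
  qed
  thus ?thesis using assms by auto
qed

lemma gfun_eq:
  assumes "j < p" "k < ns j"
  shows "gfun p ns w (Nsum ns j + k) x = x ^ k * w j x"
proof -
  have "(THE j'. j' < p \<and> Nsum ns j' \<le> Nsum ns j + k \<and> Nsum ns j + k < Nsum ns (Suc j')) = j"
  proof (rule the_equality)
    show "j < p \<and> Nsum ns j \<le> Nsum ns j + k \<and> Nsum ns j + k < Nsum ns (Suc j)"
      using assms by (simp add: Nsum_Suc)
  next
    fix j' assume h: "j' < p \<and> Nsum ns j' \<le> Nsum ns j + k \<and> Nsum ns j + k < Nsum ns (Suc j')"
    have "Nsum ns j + k = Nsum ns j' + (Nsum ns j + k - Nsum ns j')" using h by simp
    moreover have lt: "Nsum ns j + k - Nsum ns j' < ns j'" using h unfolding Nsum_Suc by linarith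
    ultimately show "j' = j" using block_unique[of k ns j "Nsum ns j + k - Nsum ns j'" j'] assms(2) lt by simp
  qed
  thus ?thesis unfolding gfun_def Let_def by simp
qed

lemma Delta_block: "Delta (block ns x i) = (\<Prod>k<ns i. \<Prod>j<k. x (Nsum ns i + k) - x (Nsum ns i + j))"
  unfolding Delta_def block_def by (rule prod.cong, auto intro!: prod.cong)

lemma Delta2_block: "Delta2 (block ns x i) (block ns x i') =
   (\<Prod>k<ns i. \<Prod>j<ns i'. x (Nsum ns i + k) - x (Nsum ns i' + j))"
  unfolding Delta2_def block_def by (rule prod.cong, auto intro!: prod.cong)

lemma prod_lessThan_add: "(\<Prod>k<(a::nat)+b. g k) = (\<Prod>k<a. g k) * (\<Prod>t<b. g (a + t))"
  by (induction b, auto simp: mult.assoc)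

lemma prod_Nsum: "(\<Prod>k<Nsum ns p. g k) = (\<Prod>i<p. \<Prod>s<ns i. g (Nsum ns i + s))"
  by (induction p, auto simp: Nsum_Suc prod_lessThan_add)

lemma vdm_decomp:
  "(\<Prod>k<Nsum ns p. \<Prod>j<k. (x k::real) - x j)
   = (\<Prod>i<p. Delta (block ns x i)) * (\<Prod>j<p. \<Prod>i<j. Delta2 (block ns x j) (block ns x i))"
proof -
  have "(\<Prod>k<Nsum ns p. \<Prod>j<k. x k - x j)
      = (\<Prod>i<p. \<Prod>s<ns i. \<Prod>j<Nsum ns i + s. x (Nsum ns i + s) - x j)"
    by (rule prod_Nsum)
  also have "\<dots> = (\<Prod>i<p. \<Prod>s<ns i. (\<Prod>i'<i. \<Prod>s'<ns i'. x (Nsum ns i + s) - x (Nsum ns i' + s'))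
      * (\<Prod>t<s. x (Nsum ns i + s) - x (Nsum ns i + t)))"
    by (simp add: prod_lessThan_add prod_Nsum)
  also have "\<dots> = (\<Prod>i<p. Delta (block ns x i)) * (\<Prod>j<p. \<Prod>i<j. Delta2 (block ns x j) (block ns x i))"
    unfolding Delta_block Delta2_block prod.distrib
    by (simp add: mult.commute, subst (2) prod.swap, simp)
  finally show ?thesis .
qed



lemma sep_intervals:
  assumes ab: "\<And>j. j < p \<Longrightarrow> \<alpha> j \<le> (\<beta> j::real)"
    and ba: "\<And>j. Suc j < p \<Longrightarrow> \<beta> j < \<alpha> (Suc j)"
    and "j < j'" "j' < p"
  shows "\<beta> j < \<alpha> j'"
  using assms(3,4)
proof (induction j')
  case 0 then show ?case by simp
next
  case (Suc j0)
  show ?case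
  proof (cases "j = j0")
    case True then show ?thesis using ba Suc by simp
  next
    case False
    hence "\<beta> j < \<alpha> j0" using Suc by simp
    also have "\<alpha> j0 \<le> \<beta> j0" using ab Suc by simp
    also have "\<beta> j0 < \<alpha> (Suc j0)" using ba Suc by simp
    finally show ?thesis .
  qed
qed

lemma Gmat_def': "Gmat q ns w x = mat (Nsum ns q) (Nsum ns q) (\<lambda>(j, k). gfun q ns w j (x k))"
  by (simp add: Gmat_def Let_def)

lemma det_wvdm: "det (mat n n (\<lambda>(i,k). (y k::real) ^ i * c k)) = (\<Prod>k<n. \<Prod>j<k. y k - y j) * (\<Prod>k<n. c k)"
proof -
  have "mat n n (\<lambda>(i,k). y k ^ i * c k) = mat n n (\<lambda>(i,k). mat n n (\<lambda>(j,k). y k ^ j) $$ (i,k) * c k)"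
    by (rule eq_matI, auto)
  also have "det \<dots> = det (mat n n (\<lambda>(j,k). y k ^ j)) * (\<Prod>k<n. c k)"
    by (rule det_scale_cols, simp)
  finally show ?thesis by (simp add: vandermonde)
qed

lemma det_in_intervals:
  assumes ab: "\<And>j. j < p \<Longrightarrow> \<alpha> j \<le> (\<beta> j::real)"
    and ba: "\<And>j. Suc j < p \<Longrightarrow> \<beta> j < \<alpha> (Suc j)"
    and wz: "\<And>j x. j < p \<Longrightarrow> x \<notin> {\<alpha> j..\<beta> j} \<Longrightarrow> w j x = 0"
    and hin: "\<forall>j<p. \<forall>k<ns j. x (Nsum ns j + k) \<in> {\<alpha> j..\<beta> j}"
  shows "q \<le> p \<Longrightarrow> det (Gmat q ns w x) = (\<Prod>i<q. Delta (block ns x i) * (\<Prod>k<ns i. w i (x (Nsum ns i + k))))"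
proof (induction q)
  case 0
  then show ?case by (simp add: Gmat_def')
next
  case (Suc q)
  hence qp: "q < p" by simp
  define B where "B = mat (Nsum ns q) (ns q) (\<lambda>(m,k). gfun (Suc q) ns w m (x (Nsum ns q + k)))"
  define D where "D = mat (ns q) (ns q) (\<lambda>(i,k). x (Nsum ns q + k) ^ i * w q (x (Nsum ns q + k)))"
  have eq: "Gmat (Suc q) ns w x = four_block_mat (Gmat q ns w x) B (0\<^sub>m (ns q) (Nsum ns q)) D"
  proof (rule eq_matI)
    fix i j assume "i < dim_row (four_block_mat (Gmat q ns w x) B (0\<^sub>m (ns q) (Nsum ns q)) D)"
      "j < dim_col (four_block_mat (Gmat q ns w x) B (0\<^sub>m (ns q) (Nsum ns q)) D)"
    hence ij: "i < Nsum ns q + ns q" "j < Nsum ns q + ns q" by (auto simp: Gmat_def' D_def)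
    show "Gmat (Suc q) ns w x $$ (i, j) = four_block_mat (Gmat q ns w x) B (0\<^sub>m (ns q) (Nsum ns q)) D $$ (i, j)"
    proof (cases "i < Nsum ns q")
      case True
      then obtain a b where ab1: "a < q" "b < ns a" "i = Nsum ns a + b" using Nsum_decomp by blast
      have g: "gfun (Suc q) ns w i y = gfun q ns w i y" for y
        unfolding ab1 using ab1 qp by (simp add: gfun_eq)
      show ?thesis using True ij by (auto simp: Gmat_def' Nsum_Suc B_def D_def g)
    next
      case False
      define b where "b = i - Nsum ns q"
      have ib: "i = Nsum ns q + b" "b < ns q" using False ij by (auto simp: b_def)
      have g: "gfun (Suc q) ns w i y = y ^ b * w q y" for y
        unfolding ib(1) using ib qp by (simp add: gfun_eq)
      show ?thesis
      proof (cases "j < Nsum ns q")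
        case True
        then obtain a c where ac: "a < q" "c < ns a" "j = Nsum ns a + c" using Nsum_decomp by blast
        have "x j \<in> {\<alpha> a..\<beta> a}" using hin ac qp by simp
        moreover have "\<beta> a < \<alpha> q" by (rule sep_intervals[of p \<alpha> \<beta>], fact ab, fact ba, fact ac(1), fact qp)
        ultimately have "x j \<notin> {\<alpha> q..\<beta> q}" by auto
        hence "w q (x j) = 0" using wz qp by simp
        then show ?thesis using True False ij by (auto simp: Gmat_def' Nsum_Suc D_def g)
      next
        case False
        then show ?thesis using \<open>\<not> i < Nsum ns q\<close> ij by (auto simp: Gmat_def' Nsum_Suc D_def g b_def)
      qed
    qed
  qed (auto simp: Gmat_def' Nsum_Suc D_def)
  have "det (Gmat (Suc q) ns w x) = det (Gmat q ns w x) * det D"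
    unfolding eq by (rule det_four_block_mat_lower_left_zero, auto simp: Gmat_def' B_def D_def)
  also have "det D = Delta (block ns x q) * (\<Prod>k<ns q. w q (x (Nsum ns q + k)))"
    unfolding D_def det_wvdm Delta_block ..
  finally show ?case using Suc by simp
qed



lemma downset_card:
  fixes g :: "nat \<Rightarrow> nat" and n k :: nat
  assumes mono: "\<And>a b. a \<le> b \<Longrightarrow> b < n \<Longrightarrow> g a \<le> (g b :: nat)" and k: "k < n"
  shows "g k \<le> v \<longleftrightarrow> k < card {i. i < n \<and> g i \<le> v}"
proof
  assume gk: "g k \<le> v"
  have "{..k} \<subseteq> {i. i < n \<and> g i \<le> v}" using mono k gk by (auto intro: order_trans)
  hence "card {..k} \<le> card {i. i < n \<and> g i \<le> v}" by (intro card_mono, auto)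
  thus "k < card {i. i < n \<and> g i \<le> v}" by simp
next
  assume kc: "k < card {i. i < n \<and> g i \<le> v}"
  show "g k \<le> v"
  proof (rule ccontr)
    assume "\<not> g k \<le> v"
    hence "{i. i < n \<and> g i \<le> v} \<subseteq> {..<k}" using mono
      by (auto, meson le_trans not_le)
    hence "card {i. i < n \<and> g i \<le> v} \<le> card {..<k}" by (intro card_mono, auto)
    thus False using kc by simp
  qed
qed

lemma mono_perm_eq:
  fixes f h :: "nat \<Rightarrow> nat" and n k :: nat
  assumes fm: "\<And>a b. a \<le> b \<Longrightarrow> b < n \<Longrightarrow> f a \<le> (f b :: nat)"
    and hm: "\<And>a b. a \<le> b \<Longrightarrow> b < n \<Longrightarrow> h a \<le> (h b :: nat)"
    and tau: "tt permutes {0..<n}"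
    and h: "\<And>k. k < n \<Longrightarrow> h k = f (tt k)"
    and k: "k < n"
  shows "h k = f k"
proof -
  have c: "card {i. i < n \<and> h i \<le> v} = card {i. i < n \<and> f i \<le> v}" for v
  proof -
    have ti: "tt i < n" if "i < n" for i using permutes_in_image[OF tau, of i] that by auto
    have "tt ` {i. i < n \<and> h i \<le> v} = {i. i < n \<and> f i \<le> v}"
    proof
      show "tt ` {i. i < n \<and> h i \<le> v} \<subseteq> {i. i < n \<and> f i \<le> v}" using ti h by auto
      show "{i. i < n \<and> f i \<le> v} \<subseteq> tt ` {i. i < n \<and> h i \<le> v}"
      proof
        fix m assume m: "m \<in> {i. i < n \<and> f i \<le> v}"
        have "tt (Hilbert_Choice.inv tt m) = m" using permutes_inverses(1)[OF tau] by simp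
        moreover have "Hilbert_Choice.inv tt m < n" using m permutes_in_image[OF permutes_inv[OF tau]] by auto
        ultimately show "m \<in> tt ` {i. i < n \<and> h i \<le> v}" using m h
          by (metis (mono_tags, lifting) image_eqI mem_Collect_eq)
      qed
    qed
    moreover have "inj_on tt {i. i < n \<and> h i \<le> v}"
      using permutes_inj[OF tau] by (simp add: inj_on_def inj_def)
    ultimately show ?thesis using card_image by metis
  qed
  have "h k \<le> f k" using downset_card[where g=h and v="f k", OF hm k] downset_card[where g=f and v="f k", OF fm k] c by simp
  moreover have "f k \<le> h k" using downset_card[where g=h and v="h k", OF hm k] downset_card[where g=f and v="h k", OF fm k] c by simp
  ultimately show ?thesis by simp
qed

definition blk :: "(nat \<Rightarrow> nat) \<Rightarrow> nat \<Rightarrow> nat" where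
  "blk ns m = (THE j. \<exists>k. k < ns j \<and> m = Nsum ns j + k)"

lemma blk_eq: "k < ns j \<Longrightarrow> blk ns (Nsum ns j + k) = j"
  unfolding blk_def
  by (rule the_equality, blast, metis block_unique)

lemma blk_props:
  assumes "m < Nsum ns p"
  shows "blk ns m < p \<and> Nsum ns (blk ns m) \<le> m \<and> m < Nsum ns (Suc (blk ns m))"
proof -
  obtain j k where "j < p" "k < ns j" "m = Nsum ns j + k" using Nsum_decomp[OF assms] by blast
  thus ?thesis using blk_eq by (simp add: Nsum_Suc)
qed

lemma blk_mono: assumes "a \<le> b" "b < Nsum ns p" shows "blk ns a \<le> blk ns b"
proof (rule ccontr)
  assume "\<not> blk ns a \<le> blk ns b"
  hence "Suc (blk ns b) \<le> blk ns a" by simp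
  hence "Nsum ns (Suc (blk ns b)) \<le> Nsum ns (blk ns a)" by (rule Nsum_mono)
  moreover have "b < Nsum ns (Suc (blk ns b))" using blk_props[OF assms(2)] by simp
  moreover have "a < Nsum ns p" using assms by simp
  hence "Nsum ns (blk ns a) \<le> a" using blk_props[of a ns p] by simp
  ultimately show False using assms by simp
qed

lemma det_not_in_intervals:
  assumes ab: "\<And>j. j < p \<Longrightarrow> \<alpha> j \<le> (\<beta> j::real)"
    and ba: "\<And>j. Suc j < p \<Longrightarrow> \<beta> j < \<alpha> (Suc j)"
    and wz: "\<And>j x. j < p \<Longrightarrow> x \<notin> {\<alpha> j..\<beta> j} \<Longrightarrow> w j x = 0"
    and sm: "strict_mono_on {..<Nsum ns p} x"
    and nin: "\<not> (\<forall>j<p. \<forall>k<ns j. x (Nsum ns j + k) \<in> {\<alpha> j..\<beta> j})"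
  shows "det (Gmat p ns w x) = 0"
proof -
  let ?n = "Nsum ns p"
  have Gc: "Gmat p ns w x \<in> carrier_mat ?n ?n" by (simp add: Gmat_def')
  have "(\<Prod>i = 0..<?n. Gmat p ns w x $$ (i, \<sigma> i)) = 0" if \<sigma>: "\<sigma> permutes {0..<?n}" for \<sigma>
  proof (rule ccontr)
    assume "(\<Prod>i = 0..<?n. Gmat p ns w x $$ (i, \<sigma> i)) \<noteq> 0"
    hence nz: "\<And>i. i < ?n \<Longrightarrow> Gmat p ns w x $$ (i, \<sigma> i) \<noteq> 0" by auto
    have si: "\<sigma> i < ?n" if "i < ?n" for i using permutes_in_image[OF \<sigma>, of i] that by auto
    have inI: "x (\<sigma> i) \<in> {\<alpha> (blk ns i)..\<beta> (blk ns i)}" if i: "i < ?n" for i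
    proof (rule ccontr)
      assume out: "x (\<sigma> i) \<notin> {\<alpha> (blk ns i)..\<beta> (blk ns i)}"
      obtain j where jd: "j = blk ns i" by simp
      have jb: "j < p" "Nsum ns j \<le> i" "i < Nsum ns (Suc j)" using blk_props[OF i] jd by auto
      define kk where "kk = i - Nsum ns j"
      have ik: "i = Nsum ns j + kk" "kk < ns j" using jb unfolding kk_def Nsum_Suc by auto
      have "gfun p ns w i (x (\<sigma> i)) = x (\<sigma> i) ^ kk * w j (x (\<sigma> i))"
        unfolding ik(1) by (rule gfun_eq[where ns=ns and k=kk], fact jb(1), fact ik(2))
      also have "w j (x (\<sigma> i)) = 0" using wz[OF jb(1)] out jd by simp
      finally have "Gmat p ns w x $$ (i, \<sigma> i) = 0" using i si[OF i] by (simp add: Gmat_def')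
      thus False using nz[OF i] by simp
    qed
    define tt where "tt = Hilbert_Choice.inv \<sigma>"
    have tau: "tt permutes {0..<?n}" unfolding tt_def by (rule permutes_inv[OF \<sigma>])
    have ti: "tt i < ?n" if "i < ?n" for i using permutes_in_image[OF tau, of i] that by auto
    have st: "\<sigma> (tt k) = k" for k unfolding tt_def using permutes_inverses(1)[OF \<sigma>] by simp
    define h where "h k = blk ns (tt k)" for k
    have xh: "x k \<in> {\<alpha> (h k)..\<beta> (h k)}" if "k < ?n" for k
      using inI[OF ti[OF that]] st unfolding h_def by simp
    have hp: "h k < p" if "k < ?n" for k using blk_props[OF ti[OF that]] unfolding h_def by simp
    have hm: "h a \<le> h b" if "a \<le> b" "b < ?n" for a b
    proof (cases "a = b")
      case False
      hence ab': "a < b" "a < ?n" using that by auto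
      have xab: "x a < x b" using strict_mono_onD[OF sm, of a b] ab' that by simp
      show ?thesis
      proof (rule ccontr)
        assume "\<not> h a \<le> h b"
        hence hba: "h b < h a" by simp
        have "\<beta> (h b) < \<alpha> (h a)"
          by (rule sep_intervals[of p \<alpha> \<beta> "h b" "h a", OF ab ba hba hp[OF ab'(2)]])
        thus False using xh[OF that(2)] xh[OF ab'(2)] xab by auto
      qed
    qed simp
    have fm: "blk ns a \<le> blk ns b" if "a \<le> b" "b < ?n" for a b by (rule blk_mono[OF that])
    have hf: "h k = blk ns k" if "k < ?n" for k
      by (rule mono_perm_eq[where f="blk ns" and h=h and tt=tt and n="?n"], fact fm, fact hm, fact tau, simp add: h_def, fact that)
    have "\<forall>j<p. \<forall>k<ns j. x (Nsum ns j + k) \<in> {\<alpha> j..\<beta> j}"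
    proof (intro allI impI)
      fix j k assume jk: "j < p" "k < ns j"
      have "Nsum ns j + k < Nsum ns (Suc j)" using jk by (simp add: Nsum_Suc)
      also have "\<dots> \<le> ?n" using jk by (intro Nsum_mono, simp)
      finally have lt: "Nsum ns j + k < ?n" .
      show "x (Nsum ns j + k) \<in> {\<alpha> j..\<beta> j}" using xh[OF lt] hf[OF lt] blk_eq[where ns=ns and j=j and k=k] jk(2) by simp
    qed
    thus False using nin by simp
  qed
  thus ?thesis unfolding det_def'[OF Gc] by (intro sum.neutral, auto)
qed



lemma det_permute_cols:
  assumes A: "A \<in> carrier_mat n n" and t: "t permutes {0..<n}"
  shows "det (mat n n (\<lambda>(i,j). A $$ (i, t j))) = signof t * det A"
proof -
  have ti: "t i < n" if "i < n" for i using permutes_in_image[OF t, of i] that by auto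
  have "mat n n (\<lambda>(i,j). A $$ (i, t j)) = transpose_mat (mat n n (\<lambda>(i,j). transpose_mat A $$ (t i, j)))"
    by (rule eq_matI, insert A ti, auto)
  hence "det (mat n n (\<lambda>(i,j). A $$ (i, t j))) = det (mat n n (\<lambda>(i,j). transpose_mat A $$ (t i, j)))"
    by (simp add: det_transpose[of _ n])
  also have "\<dots> = signof t * det (transpose_mat A)"
    by (rule det_permute_rows[OF _ t], insert A, auto)
  finally show ?thesis using det_transpose[OF A] by simp
qed

lemma sort_perm:
  fixes x :: "nat \<Rightarrow> real"
  assumes inj: "inj_on x {..<n}"
  shows "\<exists>t. t permutes {0..<n} \<and> strict_mono_on {..<n} (x \<circ> t)"
proof -
  define L where "L = sorted_list_of_set (x ` {..<n})"
  have lenL: "length L = n" unfolding L_def using card_image[OF inj] by simp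
  have setL: "set L = x ` {..<n}" unfolding L_def by simp
  have sL: "sorted_wrt (<) L" unfolding L_def using strict_sorted_list_of_set by simp
  define t where "t i = (if i < n then inv_into {..<n} x (L ! i) else i)" for i
  have Li: "L ! i \<in> x ` {..<n}" if "i < n" for i using setL lenL that nth_mem by metis
  have tn: "t i < n" if "i < n" for i using inv_into_into[OF Li[OF that]] that by (simp add: t_def)
  have xt: "x (t i) = L ! i" if "i < n" for i using f_inv_into_f[OF Li[OF that]] that by (simp add: t_def)
  have sm: "strict_mono_on {..<n} (x \<circ> t)"
    by (rule strict_mono_onI, auto simp: xt intro!: sorted_wrt_nth_less[OF sL] simp: lenL)
  have injt: "inj_on t {..<n}"
  proof (rule inj_onI)
    fix a b assume ab: "a \<in> {..<n}" "b \<in> {..<n}" "t a = t b"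
    show "a = b"
    proof (rule ccontr)
      assume "a \<noteq> b"
      hence "a < b \<or> b < a" by auto
      thus False using strict_mono_onD[OF sm] ab by (metis comp_apply less_irrefl)
    qed
  qed
  have img: "t ` {..<n} = {..<n}"
    by (rule card_subset_eq, auto simp: tn card_image[OF injt])
  have "bij_betw t {0..<n} {0..<n}" using injt img by (simp add: bij_betw_def lessThan_atLeast0)
  hence "t permutes {0..<n}" by (rule bij_imp_permutes, simp add: t_def)
  thus ?thesis using sm by blast
qed

lemma vdm_nonneg:
  assumes "strict_mono_on {..<n} (y::nat \<Rightarrow> real)"
  shows "(\<Prod>k<n. \<Prod>j<k. y k - y j) \<ge> 0"
proof (intro prod_nonneg ballI)
  fix k j assume "k \<in> {..<n}" "j \<in> {..<k}"
  hence "y j < y k" using strict_mono_onD[OF assms, of j k] by auto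
  thus "0 \<le> y k - y j" by simp
qed

lemma signof_sq: "signof (t::nat\<Rightarrow>nat) * signof t = (1::real)"
  by (simp add: sign_def)



theorem mainTheorem3:
  fixes p :: nat and \<alpha> \<beta> :: "nat \<Rightarrow> real" and w :: "nat \<Rightarrow> real \<Rightarrow> real"
    and ns :: "nat \<Rightarrow> nat"
  assumes "p \<ge> 1"
    and "\<And>j. j < p \<Longrightarrow> \<alpha> j \<le> \<beta> j"
    and "\<And>j. Suc j < p \<Longrightarrow> \<beta> j < \<alpha> (Suc j)"
    and "\<And>j x. j < p \<Longrightarrow> w j x \<ge> 0"
    and "\<And>j x. j < p \<Longrightarrow> x \<notin> {\<alpha> j..\<beta> j} \<Longrightarrow> w j x = 0"
  shows
    "(\<forall>x :: nat \<Rightarrow> real. strict_mono_on {..<Nsum ns p} x \<longrightarrow> det (Gmat p ns w x) \<ge> 0)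
     \<and> (\<forall>x :: nat \<Rightarrow> real. det (Vmat (Nsum ns p) x) * det (Gmat p ns w x) \<ge> 0)
     \<and> (\<forall>x :: nat \<Rightarrow> real. strict_mono_on {..<Nsum ns p} x
          \<longrightarrow> (\<forall>j<p. \<forall>k<ns j. x (Nsum ns j + k) \<in> {\<alpha> j..\<beta> j})
          \<longrightarrow> det (Gmat p ns w x)
                = (\<Prod>i<p. Delta (block ns x i) * (\<Prod>k<ns i. w i (x (Nsum ns i + k))))
            \<and> det (Vmat (Nsum ns p) x) * det (Gmat p ns w x)
                = (\<Prod>i<p. Delta (block ns x i) ^ 2)
                  * (\<Prod>j<p. \<Prod>i<j. Delta2 (block ns x j) (block ns x i))
                  * (\<Prod>i<p. \<Prod>k<ns i. w i (x (Nsum ns i + k))))"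
proof -
  note ab = assms(2) and ba = assms(3) and wpos = assms(4) and wz = assms(5)
  let ?n = "Nsum ns p"
  have detV: "det (Vmat n x) = (\<Prod>k<n. \<Prod>j<k. x k - x j)" for n x
    unfolding Vmat_def by (rule vandermonde)
  have P1: "det (Gmat p ns w x) \<ge> 0" if sm: "strict_mono_on {..<?n} x" for x
  proof (cases "\<forall>j<p. \<forall>k<ns j. x (Nsum ns j + k) \<in> {\<alpha> j..\<beta> j}")
    case True
    have "det (Gmat p ns w x) = (\<Prod>i<p. Delta (block ns x i) * (\<Prod>k<ns i. w i (x (Nsum ns i + k))))"
      by (rule det_in_intervals[OF ab ba wz True order_refl])
    also have "\<dots> \<ge> 0"
    proof (rule prod_nonneg)
      fix i assume i: "i \<in> {..<p}"
      have w0: "0 \<le> (\<Prod>k<ns i. w i (x (Nsum ns i + k)))" using wpos i by (intro prod_nonneg, auto)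
      have "0 \<le> Delta (block ns x i)" unfolding Delta_block
      proof (intro prod_nonneg ballI)
        fix k j assume kj: "k \<in> {..<ns i}" "j \<in> {..<k}"
        have "Nsum ns i + k < Nsum ns (Suc i)" using kj by (simp add: Nsum_Suc)
        also have "\<dots> \<le> ?n" using i by (intro Nsum_mono, simp)
        finally have "x (Nsum ns i + j) < x (Nsum ns i + k)"
          using strict_mono_onD[OF sm, of "Nsum ns i + j" "Nsum ns i + k"] kj by simp
        thus "0 \<le> x (Nsum ns i + k) - x (Nsum ns i + j)" by simp
      qed
      thus "0 \<le> Delta (block ns x i) * (\<Prod>k<ns i. w i (x (Nsum ns i + k)))" using w0 by simp
    qed
    finally show ?thesis .
  next
    case False
    then show ?thesis using det_not_in_intervals[OF ab ba wz sm False] by simp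
  qed
  have P2: "det (Vmat ?n x) * det (Gmat p ns w x) \<ge> 0" for x
  proof (cases "inj_on x {..<?n}")
    case False
    then obtain a b where abn: "a < ?n" "b < ?n" "a \<noteq> b" "x a = x b" unfolding inj_on_def by auto
    define k where "k = max a b"
    define j where "j = min a b"
    have z: "(\<Prod>k<?n. \<Prod>j<k. x k - x j) = 0"
    proof (rule prod_zero[OF finite_lessThan], intro bexI)
      show "k \<in> {..<?n}" using abn by (simp add: k_def)
      show "(\<Prod>j<k. x k - x j) = 0"
        by (rule prod_zero[OF finite_lessThan], rule bexI[of _ j], insert abn, auto simp: k_def j_def max_def min_def)
    qed
    show ?thesis unfolding detV z by simp
  next
    case True
    obtain t where t: "t permutes {0..<?n}" and sm: "strict_mono_on {..<?n} (x \<circ> t)"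
      using sort_perm[OF True] by blast
    have ti: "t i < ?n" if "i < ?n" for i using permutes_in_image[OF t, of i] that by auto
    have Veq: "Vmat ?n (x \<circ> t) = mat ?n ?n (\<lambda>(i,j). Vmat ?n x $$ (i, t j))"
      by (rule eq_matI, auto simp: Vmat_def ti)
    have Geq: "Gmat p ns w (x \<circ> t) = mat ?n ?n (\<lambda>(i,j). Gmat p ns w x $$ (i, t j))"
      by (rule eq_matI, auto simp: Gmat_def' ti)
    have dV: "det (Vmat ?n (x \<circ> t)) = signof t * det (Vmat ?n x)"
      unfolding Veq by (rule det_permute_cols[OF _ t], simp add: Vmat_def)
    have dG: "det (Gmat p ns w (x \<circ> t)) = signof t * det (Gmat p ns w x)"
      unfolding Geq by (rule det_permute_cols[OF _ t], simp add: Gmat_def')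
    have "det (Vmat ?n x) * det (Gmat p ns w x) = det (Vmat ?n (x \<circ> t)) * det (Gmat p ns w (x \<circ> t))"
      unfolding dV dG using signof_sq[of t] by (simp add: algebra_simps)
    also have "\<dots> \<ge> 0"
      using P1[OF sm] vdm_nonneg[OF sm] unfolding detV by simp
    finally show ?thesis .
  qed
  have P3: "det (Gmat p ns w x) = (\<Prod>i<p. Delta (block ns x i) * (\<Prod>k<ns i. w i (x (Nsum ns i + k))))
            \<and> det (Vmat ?n x) * det (Gmat p ns w x)
                = (\<Prod>i<p. Delta (block ns x i) ^ 2)
                  * (\<Prod>j<p. \<Prod>i<j. Delta2 (block ns x j) (block ns x i))
                  * (\<Prod>i<p. \<Prod>k<ns i. w i (x (Nsum ns i + k)))"
    if hin: "\<forall>j<p. \<forall>k<ns j. x (Nsum ns j + k) \<in> {\<alpha> j..\<beta> j}" for x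
  proof -
    have G: "det (Gmat p ns w x) = (\<Prod>i<p. Delta (block ns x i) * (\<Prod>k<ns i. w i (x (Nsum ns i + k))))"
      by (rule det_in_intervals[OF ab ba wz hin order_refl])
    have V: "det (Vmat ?n x) = (\<Prod>i<p. Delta (block ns x i)) * (\<Prod>j<p. \<Prod>i<j. Delta2 (block ns x j) (block ns x i))"
      unfolding detV by (rule vdm_decomp)
    show ?thesis unfolding G V prod.distrib power2_eq_square by (simp add: algebra_simps)
  qed
  show ?thesis using P1 P2 P3 by blast
qed

end
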